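(* Let $D$ be a division algebra and let $\sigma_1,\ldots,\sigma_n$ be pairwise commuting automorphisms of $D$. If the tuple $(\sigma_1,\ldots,\sigma_r)$ is not automorphically normalizable over $D$ for some integer $r\le n$, then the tuple $(\sigma_1,\ldots,\sigma_n)$ is not automorphically normalizable over $D$.
   Context: All rings are associative with unity. For commuting automorphisms $\tau_1,\ldots,\tau_k$ of $D$, $D[t_1,\ldots,t_k;\tau_1,\ldots,\tau_k]$ is the skew polynomial ring in pairwise commuting variables with $t_ia=\tau_i(a)t_i$ for $a\in D$. For a ring $S\supseteq D$, $a\in S$ is automorphic over $D$ with respect to $\tau$ if $ab=\tau(b)a$ for all $b\in D$. Commuting $a_1,\ldots,a_m\in S$ are (left) algebraically independent over $D$ if monomials in them are left linearly independent over $D$. $S$ is automorphically normalizable over $D$ if there exist $m\ge0$ and commuting $a_1,\ldots,a_m\in S$, automorphic over $D$ with respect to pairwise commuting automorphisms, left algebraically independent over $D$, such that $S$ is finitely generated as a left module over the subring $D[a_1,\ldots,a_m]$ generated by $D\cup\{a_1,\ldots,a_m\}$. A tuple $(\tau_1,\ldots,\tau_k)$ of commuting automorphisms is automorphically normalizable over $D$ if every quotient of $D[t_1,\ldots,t_k;\tau_1,\ldots,\tau_k]$ by a proper two-sided ideal is automorphically normalizable over $D$. *)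

theory Defs
  imports "HOL-Algebra.QuotRing" "HOL-Algebra.Generated_Rings"
begin

definition ring_aut :: "('a::division_ring \<Rightarrow> 'a) \<Rightarrow> bool" where
  "ring_aut f \<longleftrightarrow> bij f \<and> (\<forall>x y. f (x + y) = f x + f y) \<and> (\<forall>x y. f (x * y) = f x * f y) \<and> f 1 = 1"

fun taupow :: "(nat \<Rightarrow> 'a \<Rightarrow> 'a) \<Rightarrow> nat \<Rightarrow> (nat \<Rightarrow> nat) \<Rightarrow> 'a \<Rightarrow> 'a" where
  "taupow \<tau> 0 \<alpha> = id"
| "taupow \<tau> (Suc k) \<alpha> = taupow \<tau> k \<alpha> \<circ> (\<tau> k ^^ \<alpha> k)"

text \<open>Skew polynomial ring D[t_0,...,t_(k-1); tau_0,...,tau_(k-1)]: a polynomial is a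
  finitely supported coefficient function on exponent vectors alpha (with alpha i = 0 for i \<ge> k);
  p is the sum of p(alpha) t^alpha, and (a t^alpha)(b t^beta) = a tau^alpha(b) t^(alpha+beta).\<close>
definition skew_carrier :: "nat \<Rightarrow> ((nat \<Rightarrow> nat) \<Rightarrow> 'a::division_ring) set" where
  "skew_carrier k = {p. finite {\<alpha>. p \<alpha> \<noteq> 0} \<and> (\<forall>\<alpha>. p \<alpha> \<noteq> 0 \<longrightarrow> (\<forall>i\<ge>k. \<alpha> i = 0))}"

definition skew_const :: "'a::division_ring \<Rightarrow> (nat \<Rightarrow> nat) \<Rightarrow> 'a" where
  "skew_const d = (\<lambda>\<alpha>. if \<alpha> = (\<lambda>_. 0) then d else 0)"

definition skew_mult :: "(nat \<Rightarrow> 'a::division_ring \<Rightarrow> 'a) \<Rightarrow> nat \<Rightarrow> ((nat \<Rightarrow> nat) \<Rightarrow> 'a) \<Rightarrow> ((nat \<Rightarrow> nat) \<Rightarrow> 'a) \<Rightarrow> (nat \<Rightarrow> nat) \<Rightarrow> 'a" where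
  "skew_mult \<tau> k p q \<gamma> = (\<Sum>\<alpha>\<in>{\<alpha>. \<forall>i. \<alpha> i \<le> \<gamma> i}. p \<alpha> * taupow \<tau> k \<alpha> (q (\<lambda>i. \<gamma> i - \<alpha> i)))"

definition skew_poly_ring :: "(nat \<Rightarrow> 'a::division_ring \<Rightarrow> 'a) \<Rightarrow> nat \<Rightarrow> ((nat \<Rightarrow> nat) \<Rightarrow> 'a) ring" where
  "skew_poly_ring \<tau> k =
    \<lparr> carrier = skew_carrier k,
      mult = skew_mult \<tau> k,
      one = skew_const 1,
      zero = (\<lambda>_. 0),
      add = (\<lambda>p q \<alpha>. p \<alpha> + q \<alpha>) \<rparr>"

fun monom_in :: "('b, 'c) ring_scheme \<Rightarrow> (nat \<Rightarrow> 'b) \<Rightarrow> nat \<Rightarrow> (nat \<Rightarrow> nat) \<Rightarrow> 'b" where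
  "monom_in S a 0 \<alpha> = \<one>\<^bsub>S\<^esub>"
| "monom_in S a (Suc m) \<alpha> = monom_in S a m \<alpha> \<otimes>\<^bsub>S\<^esub> (a m [^]\<^bsub>S\<^esub> \<alpha> m)"

definition aut_normalizable :: "('b, 'c) ring_scheme \<Rightarrow> ('a::division_ring \<Rightarrow> 'b) \<Rightarrow> bool" where
  "aut_normalizable S \<iota> \<longleftrightarrow>
    (\<exists>(m::nat) (a :: nat \<Rightarrow> 'b) (\<sigma> :: nat \<Rightarrow> 'a \<Rightarrow> 'a).
       (\<forall>i<m. a i \<in> carrier S)
     \<and> (\<forall>i<m. \<forall>j<m. a i \<otimes>\<^bsub>S\<^esub> a j = a j \<otimes>\<^bsub>S\<^esub> a i)
     \<and> (\<forall>i<m. ring_aut (\<sigma> i))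
     \<and> (\<forall>i<m. \<forall>j<m. \<sigma> i \<circ> \<sigma> j = \<sigma> j \<circ> \<sigma> i)
     \<and> (\<forall>i<m. \<forall>b. a i \<otimes>\<^bsub>S\<^esub> \<iota> b = \<iota> (\<sigma> i b) \<otimes>\<^bsub>S\<^esub> a i)
     \<and> (\<forall>c :: (nat \<Rightarrow> nat) \<Rightarrow> 'a.
           finite {\<alpha>. c \<alpha> \<noteq> 0} \<longrightarrow> (\<forall>\<alpha>. c \<alpha> \<noteq> 0 \<longrightarrow> (\<forall>i\<ge>m. \<alpha> i = 0)) \<longrightarrow>
           finsum S (\<lambda>\<alpha>. \<iota> (c \<alpha>) \<otimes>\<^bsub>S\<^esub> monom_in S a m \<alpha>) {\<alpha>. c \<alpha> \<noteq> 0} = \<zero>\<^bsub>S\<^esub> \<longrightarrow>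
           (\<forall>\<alpha>. c \<alpha> = 0))
     \<and> (\<exists>G. finite G \<and> G \<subseteq> carrier S \<and>
           (\<forall>s\<in>carrier S. \<exists>r. (\<forall>g\<in>G. r g \<in> generate_ring S (range \<iota> \<union> a ` {..<m}))
                               \<and> s = finsum S (\<lambda>g. r g \<otimes>\<^bsub>S\<^esub> g) G)))"

definition tuple_aut_normalizable :: "(nat \<Rightarrow> 'a::division_ring \<Rightarrow> 'a) \<Rightarrow> nat \<Rightarrow> bool" where
  "tuple_aut_normalizable \<tau> k \<longleftrightarrow>
    (\<forall>I. ideal I (skew_poly_ring \<tau> k) \<longrightarrow> I \<noteq> carrier (skew_poly_ring \<tau> k) \<longrightarrow>
       aut_normalizable (skew_poly_ring \<tau> k Quot I)
         (\<lambda>d. a_r_coset (skew_poly_ring \<tau> k) I (skew_const d)))"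

end

theory Submission
  imports Defs
begin

definition hommy :: "('a::division_ring \<Rightarrow> 'a) \<Rightarrow> bool" where
  "hommy f \<longleftrightarrow> (\<forall>x y. f (x + y) = f x + f y) \<and> (\<forall>x y. f (x * y) = f x * f y) \<and> f 1 = 1"

lemma ring_aut_hommy: "ring_aut f \<Longrightarrow> hommy f"
  by (simp add: ring_aut_def hommy_def)

lemma hommy_id: "hommy id" by (simp add: hommy_def)

lemma hommy_comp: "hommy f \<Longrightarrow> hommy g \<Longrightarrow> hommy (f \<circ> g)"
  by (simp add: hommy_def)

lemma hommy_funpow: "hommy f \<Longrightarrow> hommy (f ^^ n)"
  by (induction n) (auto simp: hommy_id hommy_comp)

lemma hommy_add: "hommy f \<Longrightarrow> f (x + y) = f x + f y" by (simp add: hommy_def)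
lemma hommy_mult: "hommy f \<Longrightarrow> f (x * y) = f x * f y" by (simp add: hommy_def)
lemma hommy_one: "hommy f \<Longrightarrow> f 1 = 1" by (simp add: hommy_def)
lemma hommy_zero: "hommy f \<Longrightarrow> f 0 = 0"
proof -
  assume h: "hommy f"
  have "f (0 + 0) = f 0 + f 0" using h by (simp only: hommy_def)
  then show ?thesis by simp
qed
lemma hommy_sum: "hommy f \<Longrightarrow> f (sum g S) = (\<Sum>x\<in>S. f (g x))"
  by (induction S rule: infinite_finite_induct) (auto simp: hommy_zero hommy_add)

lemma hommy_if: "hommy f \<Longrightarrow> f (if P then x else 0) = (if P then f x else 0)"
  by (simp add: hommy_zero)

lemma funpow_comm: "(\<forall>x. f (g x) = g (f x)) \<Longrightarrow> (f ^^ n) (g x) = g ((f ^^ n) x)"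
  by (induction n) auto

lemma taupow_hommy: "(\<forall>i<k. hommy (\<tau> i)) \<Longrightarrow> hommy (taupow \<tau> k \<alpha>)"
  by (induction k) (auto simp: hommy_id hommy_comp hommy_funpow)

lemma taupow_comm: "(\<forall>i<k. \<forall>x. \<tau> i (g x) = g (\<tau> i x)) \<Longrightarrow> taupow \<tau> k \<alpha> (g x) = g (taupow \<tau> k \<alpha> x)"
proof (induction k arbitrary: x)
  case 0 then show ?case by simp
next
  case (Suc k)
  have "(\<tau> k ^^ \<alpha> k) (g x) = g ((\<tau> k ^^ \<alpha> k) x)" using Suc.prems funpow_comm[of "\<tau> k" g] by simp
  then show ?case using Suc by simp
qed

lemma taupow_add:
  assumes "\<forall>i<k. \<forall>j<k. \<tau> i \<circ> \<tau> j = \<tau> j \<circ> \<tau> i"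
  shows "taupow \<tau> k (\<lambda>i. \<alpha> i + \<beta> i) x = taupow \<tau> k \<alpha> (taupow \<tau> k \<beta> x)"
  using assms
proof (induction k arbitrary: x)
  case 0 then show ?case by simp
next
  case (Suc k)
  have c0: "\<forall>i<k. \<forall>y. \<tau> i (\<tau> k y) = \<tau> k (\<tau> i y)"
    using Suc.prems by (metis comp_apply less_Suc_eq lessI)
  have c: "\<forall>i<k. \<forall>y. \<tau> i ((\<tau> k ^^ \<alpha> k) y) = (\<tau> k ^^ \<alpha> k) (\<tau> i y)"
    using c0 funpow_comm[of "\<tau> k"] by metis
  have IH: "\<And>y. taupow \<tau> k (\<lambda>i. \<alpha> i + \<beta> i) y = taupow \<tau> k \<alpha> (taupow \<tau> k \<beta> y)"
    using Suc by (metis less_SucI)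
  have "taupow \<tau> (Suc k) (\<lambda>i. \<alpha> i + \<beta> i) x = taupow \<tau> k \<alpha> (taupow \<tau> k \<beta> ((\<tau> k ^^ \<alpha> k) ((\<tau> k ^^ \<beta> k) x)))"
    using IH by (simp add: funpow_add)
  also have "\<dots> = taupow \<tau> k \<alpha> ((\<tau> k ^^ \<alpha> k) (taupow \<tau> k \<beta> ((\<tau> k ^^ \<beta> k) x)))"
    using taupow_comm[OF c] by simp
  also have "\<dots> = taupow \<tau> (Suc k) \<alpha> (taupow \<tau> (Suc k) \<beta> x)" by simp
  finally show ?case .
qed

lemma taupow_zero: "taupow \<tau> k (\<lambda>_. 0) = id"
  by (induction k) auto

lemma taupow_restrict: "r \<le> n \<Longrightarrow> \<forall>i\<ge>r. \<alpha> i = 0 \<Longrightarrow> taupow \<tau> n \<alpha> = taupow \<tau> r \<alpha>"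
  by (induction n) (auto simp: le_Suc_eq)

lemma finite_box:
  assumes "\<forall>i\<ge>k. (\<gamma>::nat\<Rightarrow>nat) i = 0"
  shows "finite {\<alpha>::nat\<Rightarrow>nat. \<forall>i. \<alpha> i \<le> \<gamma> i}"
proof -
  let ?B = "{\<alpha>::nat\<Rightarrow>nat. \<forall>i. \<alpha> i \<le> \<gamma> i}"
  have inj: "inj_on (\<lambda>\<alpha>. restrict \<alpha> {..<k}) ?B"
  proof (rule inj_onI)
    fix x y assume "x \<in> ?B" "y \<in> ?B" "restrict x {..<k} = restrict y {..<k}"
    then show "x = y" using assms
      by (metis (no_types, lifting) ext le_zero_eq lessThan_iff mem_Collect_eq not_le restrict_apply')
  qed
  have "(\<lambda>\<alpha>. restrict \<alpha> {..<k}) ` ?B \<subseteq> PiE {..<k} (\<lambda>i. {..\<gamma> i})"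
  proof (intro image_subsetI)
    fix \<alpha> assume "\<alpha> \<in> ?B"
    then show "restrict \<alpha> {..<k} \<in> PiE {..<k} (\<lambda>i. {..\<gamma> i})" by (subst restrict_PiE_iff) auto
  qed
  then have "finite ((\<lambda>\<alpha>. restrict \<alpha> {..<k}) ` ?B)"
    by (rule finite_subset) (simp add: finite_PiE)
  then show ?thesis using finite_imageD inj by blast
qed

definition padd :: "(nat\<Rightarrow>nat) \<Rightarrow> (nat\<Rightarrow>nat) \<Rightarrow> nat \<Rightarrow> nat" where
  "padd \<alpha> \<beta> = (\<lambda>i. \<alpha> i + \<beta> i)"

lemma padd_eq: "padd \<alpha> \<beta> = \<gamma> \<longleftrightarrow> (\<forall>i. \<alpha> i \<le> \<gamma> i) \<and> \<beta> = (\<lambda>i. \<gamma> i - \<alpha> i)"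
  unfolding padd_def by (auto simp: fun_eq_iff) (metis le_add1, metis add_diff_cancel_left')

lemma padd_assoc: "padd (padd \<alpha> \<beta>) \<epsilon> = padd \<alpha> (padd \<beta> \<epsilon>)"
  unfolding padd_def by auto

context
  fixes \<tau> :: "nat \<Rightarrow> 'a::division_ring \<Rightarrow> 'a" and k :: nat
  assumes hom: "\<forall>i<k. hommy (\<tau> i)"
begin

lemma T_hommy: "hommy (taupow \<tau> k \<alpha>)"
  using hom taupow_hommy by blast

lemma T0: "taupow \<tau> k \<alpha> 0 = 0"
  using T_hommy hommy_zero by blast

lemma conv:
  assumes p: "p \<in> skew_carrier k" and q: "q \<in> skew_carrier k"
    and A: "finite A" "{\<alpha>. p \<alpha> \<noteq> 0} \<subseteq> A" and B: "finite B" "{\<beta>. q \<beta> \<noteq> 0} \<subseteq> B"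
  shows "skew_mult \<tau> k p q \<gamma> = (\<Sum>\<alpha>\<in>A. \<Sum>\<beta>\<in>B. if padd \<alpha> \<beta> = \<gamma> then p \<alpha> * taupow \<tau> k \<alpha> (q \<beta>) else 0)"
proof -
  have ps: "\<And>\<alpha>. p \<alpha> \<noteq> 0 \<Longrightarrow> \<forall>i\<ge>k. \<alpha> i = 0" using p by (auto simp: skew_carrier_def)
  have qs: "\<And>\<alpha>. q \<alpha> \<noteq> 0 \<Longrightarrow> \<forall>i\<ge>k. \<alpha> i = 0" using q by (auto simp: skew_carrier_def)
  let ?box = "{\<alpha>::nat\<Rightarrow>nat. \<forall>i. \<alpha> i \<le> \<gamma> i}"
  let ?f = "\<lambda>\<alpha>. p \<alpha> * taupow \<tau> k \<alpha> (q (\<lambda>i. \<gamma> i - \<alpha> i))"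
  have L: "skew_mult \<tau> k p q \<gamma> = sum ?f ?box" by (simp add: skew_mult_def)
  show ?thesis
  proof (cases "\<forall>i\<ge>k. \<gamma> i = 0")
    case True
    have fb: "finite ?box" using finite_box[OF True] .
    have inner: "(\<Sum>\<beta>\<in>B. if padd \<alpha> \<beta> = \<gamma> then p \<alpha> * taupow \<tau> k \<alpha> (q \<beta>) else 0)
       = (if \<alpha> \<in> ?box then ?f \<alpha> else 0)" for \<alpha>
    proof (cases "\<alpha> \<in> ?box")
      case True
      then have "(\<Sum>\<beta>\<in>B. if padd \<alpha> \<beta> = \<gamma> then p \<alpha> * taupow \<tau> k \<alpha> (q \<beta>) else 0)
          = (\<Sum>\<beta>\<in>B. if \<beta> = (\<lambda>i. \<gamma> i - \<alpha> i) then p \<alpha> * taupow \<tau> k \<alpha> (q \<beta>) else 0)"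
        by (intro sum.cong) (auto simp: padd_eq)
      also have "\<dots> = (if (\<lambda>i. \<gamma> i - \<alpha> i) \<in> B then ?f \<alpha> else 0)"
        using B(1) by (simp add: sum.delta')
      also have "\<dots> = ?f \<alpha>"
      proof -
        have "(\<lambda>i. \<gamma> i - \<alpha> i) \<notin> B \<Longrightarrow> q (\<lambda>i. \<gamma> i - \<alpha> i) = 0" using B(2) by blast
        then show ?thesis using T0 by auto
      qed
      finally show ?thesis using True by simp
    next
      case False
      then have "\<And>\<beta>. padd \<alpha> \<beta> \<noteq> \<gamma>" by (auto simp: padd_eq)
      then show ?thesis using False by auto
    qed
    have "(\<Sum>\<alpha>\<in>A. \<Sum>\<beta>\<in>B. if padd \<alpha> \<beta> = \<gamma> then p \<alpha> * taupow \<tau> k \<alpha> (q \<beta>) else 0)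
       = (\<Sum>\<alpha>\<in>A. if \<alpha> \<in> ?box then ?f \<alpha> else 0)" using inner by simp
    also have "\<dots> = sum ?f (A \<inter> ?box)" using A(1) by (simp add: sum.inter_restrict)
    also have "\<dots> = sum ?f ?box"
      by (rule sum.mono_neutral_left) (use fb A(2) in auto)
    finally show ?thesis using L by simp
  next
    case False
    have "sum ?f ?box = 0"
    proof (rule sum.neutral, rule ballI)
      fix \<alpha> assume a: "\<alpha> \<in> ?box"
      show "?f \<alpha> = 0"
      proof (cases "p \<alpha> = 0 \<or> q (\<lambda>i. \<gamma> i - \<alpha> i) = 0")
        case True then show ?thesis using T0 by auto
      next
        case c: False
        have "\<forall>i\<ge>k. \<gamma> i = 0"
        proof (intro allI impI)
          fix i assume "k \<le> i"
          then have "\<alpha> i = 0" "\<gamma> i - \<alpha> i = 0" using ps qs c by blast+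
          then show "\<gamma> i = 0" using a by auto
        qed
        then show ?thesis using False by blast
      qed
    qed
    moreover have "(\<Sum>\<alpha>\<in>A. \<Sum>\<beta>\<in>B. if padd \<alpha> \<beta> = \<gamma> then p \<alpha> * taupow \<tau> k \<alpha> (q \<beta>) else 0) = 0"
    proof (intro sum.neutral ballI)
      fix \<alpha> \<beta>
      show "(if padd \<alpha> \<beta> = \<gamma> then p \<alpha> * taupow \<tau> k \<alpha> (q \<beta>) else 0) = 0"
      proof (cases "padd \<alpha> \<beta> = \<gamma> \<and> p \<alpha> \<noteq> 0 \<and> q \<beta> \<noteq> 0")
        case True
        then have "\<forall>i\<ge>k. \<gamma> i = 0" using ps qs by (auto simp: padd_def)
        then show ?thesis using False by blast
      next
        case False then show ?thesis using T0 by auto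
      qed
    qed
    ultimately show ?thesis using L by simp
  qed
qed

end

lemma swap3: "(\<Sum>a\<in>A. \<Sum>b\<in>B. \<Sum>c\<in>C. f a b c) = (\<Sum>b\<in>B. \<Sum>c\<in>C. \<Sum>a\<in>A. f a b c)"
proof -
  have "(\<Sum>a\<in>A. \<Sum>b\<in>B. \<Sum>c\<in>C. f a b c) = (\<Sum>b\<in>B. \<Sum>a\<in>A. \<Sum>c\<in>C. f a b c)" by (rule sum.swap)
  also have "\<dots> = (\<Sum>b\<in>B. \<Sum>c\<in>C. \<Sum>a\<in>A. f a b c)" by (rule sum.cong[OF refl], rule sum.swap)
  finally show ?thesis .
qed

lemma swap4: "(\<Sum>a\<in>A. \<Sum>b\<in>B. \<Sum>c\<in>C. \<Sum>d\<in>D. f a b c d) = (\<Sum>c\<in>C. \<Sum>d\<in>D. \<Sum>a\<in>A. \<Sum>b\<in>B. f a b c d)"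
proof -
  have "(\<Sum>a\<in>A. \<Sum>b\<in>B. \<Sum>c\<in>C. \<Sum>d\<in>D. f a b c d) = (\<Sum>a\<in>A. \<Sum>c\<in>C. \<Sum>d\<in>D. \<Sum>b\<in>B. f a b c d)"
    by (rule sum.cong[OF refl], rule swap3)
  also have "\<dots> = (\<Sum>c\<in>C. \<Sum>d\<in>D. \<Sum>a\<in>A. \<Sum>b\<in>B. f a b c d)" by (rule swap3)
  finally show ?thesis .
qed

lemma sum_if_out: "(\<Sum>x\<in>S. if c then f x else 0) = (if c then sum f S else 0)"
  by simp

lemma skew_const_apply: "skew_const d \<alpha> = (if \<alpha> = (\<lambda>_. 0) then d else 0)"
  by (simp add: skew_const_def)

context
  fixes \<tau> :: "nat \<Rightarrow> 'a::division_ring \<Rightarrow> 'a" and k :: nat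
  assumes hom: "\<forall>i<k. hommy (\<tau> i)"
begin

lemma supp_mult:
  assumes p: "p \<in> skew_carrier k" and q: "q \<in> skew_carrier k"
  shows "{\<gamma>. skew_mult \<tau> k p q \<gamma> \<noteq> 0} \<subseteq> (\<lambda>(\<alpha>,\<beta>). padd \<alpha> \<beta>) ` ({\<alpha>. p \<alpha> \<noteq> 0} \<times> {\<beta>. q \<beta> \<noteq> 0})"
proof
  fix \<gamma> assume g: "\<gamma> \<in> {\<gamma>. skew_mult \<tau> k p q \<gamma> \<noteq> 0}"
  have fp: "finite {\<alpha>. p \<alpha> \<noteq> 0}" and fq: "finite {\<alpha>. q \<alpha> \<noteq> 0}" using p q by (auto simp: skew_carrier_def)
  show "\<gamma> \<in> (\<lambda>(\<alpha>,\<beta>). padd \<alpha> \<beta>) ` ({\<alpha>. p \<alpha> \<noteq> 0} \<times> {\<beta>. q \<beta> \<noteq> 0})"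
  proof (rule ccontr)
    assume n: "\<gamma> \<notin> (\<lambda>(\<alpha>,\<beta>). padd \<alpha> \<beta>) ` ({\<alpha>. p \<alpha> \<noteq> 0} \<times> {\<beta>. q \<beta> \<noteq> 0})"
    have "skew_mult \<tau> k p q \<gamma> = (\<Sum>\<alpha>\<in>{\<alpha>. p \<alpha> \<noteq> 0}. \<Sum>\<beta>\<in>{\<beta>. q \<beta> \<noteq> 0}. if padd \<alpha> \<beta> = \<gamma> then p \<alpha> * taupow \<tau> k \<alpha> (q \<beta>) else 0)"
      by (rule conv[OF hom p q fp subset_refl fq subset_refl])
    also have "\<dots> = 0"
    proof (intro sum.neutral ballI)
      fix \<alpha> \<beta> assume "\<alpha> \<in> {\<alpha>. p \<alpha> \<noteq> 0}" "\<beta> \<in> {\<beta>. q \<beta> \<noteq> 0}"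
      then have "padd \<alpha> \<beta> \<noteq> \<gamma>" using n by auto
      then show "(if padd \<alpha> \<beta> = \<gamma> then p \<alpha> * taupow \<tau> k \<alpha> (q \<beta>) else 0) = 0" by simp
    qed
    finally show False using g by simp
  qed
qed

lemma mult_closed:
  assumes p: "p \<in> skew_carrier k" and q: "q \<in> skew_carrier k"
  shows "skew_mult \<tau> k p q \<in> skew_carrier k"
proof -
  have fp: "finite {\<alpha>. p \<alpha> \<noteq> 0}" and fq: "finite {\<alpha>. q \<alpha> \<noteq> 0}" using p q by (auto simp: skew_carrier_def)
  have ps: "\<And>\<alpha>. p \<alpha> \<noteq> 0 \<Longrightarrow> \<forall>i\<ge>k. \<alpha> i = 0" using p by (auto simp: skew_carrier_def)
  have qs: "\<And>\<alpha>. q \<alpha> \<noteq> 0 \<Longrightarrow> \<forall>i\<ge>k. \<alpha> i = 0" using q by (auto simp: skew_carrier_def)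
  have S: "{\<gamma>. skew_mult \<tau> k p q \<gamma> \<noteq> 0} \<subseteq> (\<lambda>(\<alpha>,\<beta>). padd \<alpha> \<beta>) ` ({\<alpha>. p \<alpha> \<noteq> 0} \<times> {\<beta>. q \<beta> \<noteq> 0})"
    using supp_mult[OF p q] .
  have "finite {\<gamma>. skew_mult \<tau> k p q \<gamma> \<noteq> 0}"
    by (rule finite_subset[OF S]) (intro finite_imageI finite_cartesian_product fp fq)
  moreover have "\<forall>\<gamma>. skew_mult \<tau> k p q \<gamma> \<noteq> 0 \<longrightarrow> (\<forall>i\<ge>k. \<gamma> i = 0)"
  proof (intro allI impI)
    fix \<gamma> i assume "skew_mult \<tau> k p q \<gamma> \<noteq> 0" "k \<le> i"
    then have "\<gamma> \<in> (\<lambda>(\<alpha>,\<beta>). padd \<alpha> \<beta>) ` ({\<alpha>. p \<alpha> \<noteq> 0} \<times> {\<beta>. q \<beta> \<noteq> 0})" using S by blast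
    then obtain \<alpha> \<beta> where "p \<alpha> \<noteq> 0" "q \<beta> \<noteq> 0" "\<gamma> = padd \<alpha> \<beta>" by auto
    then show "\<gamma> i = 0" using ps qs \<open>k \<le> i\<close> by (simp add: padd_def)
  qed
  ultimately show ?thesis by (simp add: skew_carrier_def)
qed

lemma one_mult:
  assumes q: "q \<in> skew_carrier k"
  shows "skew_mult \<tau> k (skew_const 1) q = q"
proof
  fix \<gamma>
  have fq: "finite {\<alpha>. q \<alpha> \<noteq> 0}" using q by (auto simp: skew_carrier_def)
  have c: "skew_const 1 \<in> skew_carrier k" by (simp add: skew_carrier_def skew_const_def)
  have "skew_mult \<tau> k (skew_const 1) q \<gamma> = (\<Sum>\<alpha>\<in>{\<lambda>_. 0}. \<Sum>\<beta>\<in>{\<beta>. q \<beta> \<noteq> 0}. if padd \<alpha> \<beta> = \<gamma> then skew_const 1 \<alpha> * taupow \<tau> k \<alpha> (q \<beta>) else 0)"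
    by (rule conv[OF hom c q]) (auto simp: skew_const_def fq)
  also have "\<dots> = (\<Sum>\<beta>\<in>{\<beta>. q \<beta> \<noteq> 0}. if \<beta> = \<gamma> then q \<beta> else 0)"
    by (simp add: skew_const_apply padd_def taupow_zero cong: if_cong)
  also have "\<dots> = q \<gamma>" using fq by (simp add: sum.delta)
  finally show "skew_mult \<tau> k (skew_const 1) q \<gamma> = q \<gamma>" .
qed

lemma mult_one:
  assumes p: "p \<in> skew_carrier k"
  shows "skew_mult \<tau> k p (skew_const 1) = p"
proof
  fix \<gamma>
  have fp: "finite {\<alpha>. p \<alpha> \<noteq> 0}" using p by (auto simp: skew_carrier_def)
  have c: "skew_const 1 \<in> skew_carrier k" by (simp add: skew_carrier_def skew_const_def)
  have "skew_mult \<tau> k p (skew_const 1) \<gamma> = (\<Sum>\<alpha>\<in>{\<alpha>. p \<alpha> \<noteq> 0}. \<Sum>\<beta>\<in>{\<lambda>_. 0}. if padd \<alpha> \<beta> = \<gamma> then p \<alpha> * taupow \<tau> k \<alpha> (skew_const 1 \<beta>) else 0)"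
    by (rule conv[OF hom p c]) (auto simp: skew_const_def fp)
  also have "\<dots> = (\<Sum>\<alpha>\<in>{\<alpha>. p \<alpha> \<noteq> 0}. if \<alpha> = \<gamma> then p \<alpha> else 0)"
    using T_hommy[OF hom] by (simp add: skew_const_apply padd_def hommy_one cong: if_cong)
  also have "\<dots> = p \<gamma>" using fp by (simp add: sum.delta)
  finally show "skew_mult \<tau> k p (skew_const 1) \<gamma> = p \<gamma>" .
qed

lemma l_distr:
  "skew_mult \<tau> k (\<lambda>\<alpha>. p \<alpha> + q \<alpha>) r = (\<lambda>\<gamma>. skew_mult \<tau> k p r \<gamma> + skew_mult \<tau> k q r \<gamma>)"
  by (rule ext) (simp add: skew_mult_def distrib_right sum.distrib)

lemma r_distr:
  "skew_mult \<tau> k r (\<lambda>\<alpha>. p \<alpha> + q \<alpha>) = (\<lambda>\<gamma>. skew_mult \<tau> k r p \<gamma> + skew_mult \<tau> k r q \<gamma>)"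
  using T_hommy[OF hom] by (intro ext) (simp add: skew_mult_def distrib_left sum.distrib hommy_add)

end

lemma if_mult0: "(if c then (x::'a::division_ring) else 0) * y = (if c then x * y else 0)"
  by simp

context
  fixes \<tau> :: "nat \<Rightarrow> 'a::division_ring \<Rightarrow> 'a" and k :: nat
  assumes hom: "\<forall>i<k. hommy (\<tau> i)"
    and com: "\<forall>i<k. \<forall>j<k. \<tau> i \<circ> \<tau> j = \<tau> j \<circ> \<tau> i"
begin

lemma T_padd: "taupow \<tau> k (padd \<alpha> \<beta>) x = taupow \<tau> k \<alpha> (taupow \<tau> k \<beta> x)"
  using taupow_add[OF com] by (simp add: padd_def)

lemma skew_assoc:
  assumes p: "p \<in> skew_carrier k" and q: "q \<in> skew_carrier k" and r: "r \<in> skew_carrier k"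
  shows "skew_mult \<tau> k (skew_mult \<tau> k p q) r = skew_mult \<tau> k p (skew_mult \<tau> k q r)"
proof (rule ext)
  fix \<delta>
  define A where "A = {\<alpha>. p \<alpha> \<noteq> 0}"
  define B where "B = {\<alpha>. q \<alpha> \<noteq> 0}"
  define C where "C = {\<alpha>. r \<alpha> \<noteq> 0}"
  define AB where "AB = (\<lambda>(\<alpha>,\<beta>). padd \<alpha> \<beta>) ` (A \<times> B)"
  define BC where "BC = (\<lambda>(\<alpha>,\<beta>). padd \<alpha> \<beta>) ` (B \<times> C)"
  define T where "T = taupow \<tau> k"
  define pq where "pq = skew_mult \<tau> k p q"
  define qr where "qr = skew_mult \<tau> k q r"
  have fA: "finite A" using p by (simp add: A_def skew_carrier_def)
  have fB: "finite B" using q by (simp add: B_def skew_carrier_def)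
  have fC: "finite C" using r by (simp add: C_def skew_carrier_def)
  have fAB: "finite AB" unfolding AB_def by (intro finite_imageI finite_cartesian_product fA fB)
  have fBC: "finite BC" unfolding BC_def by (intro finite_imageI finite_cartesian_product fB fC)
  have pqc: "pq \<in> skew_carrier k" unfolding pq_def by (rule mult_closed[OF hom p q])
  have qrc: "qr \<in> skew_carrier k" unfolding qr_def by (rule mult_closed[OF hom q r])
  have sAB: "{\<gamma>. pq \<gamma> \<noteq> 0} \<subseteq> AB" unfolding pq_def AB_def A_def B_def by (rule supp_mult[OF hom p q])
  have sBC: "{\<gamma>. qr \<gamma> \<noteq> 0} \<subseteq> BC" unfolding qr_def BC_def B_def C_def by (rule supp_mult[OF hom q r])
  have Th: "\<And>\<alpha>. hommy (T \<alpha>)" unfolding T_def using T_hommy[OF hom] .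
  have pqe: "pq \<gamma> = (\<Sum>\<alpha>\<in>A. \<Sum>\<beta>\<in>B. if padd \<alpha> \<beta> = \<gamma> then p \<alpha> * T \<alpha> (q \<beta>) else 0)" for \<gamma>
    unfolding pq_def T_def by (rule conv[OF hom p q fA _ fB]) (auto simp: A_def B_def)
  have qre: "qr \<gamma> = (\<Sum>\<alpha>\<in>B. \<Sum>\<beta>\<in>C. if padd \<alpha> \<beta> = \<gamma> then q \<alpha> * T \<alpha> (r \<beta>) else 0)" for \<gamma>
    unfolding qr_def T_def by (rule conv[OF hom q r fB _ fC]) (auto simp: B_def C_def)
  define F where "F \<alpha> \<beta> \<epsilon> = (if padd (padd \<alpha> \<beta>) \<epsilon> = \<delta> then p \<alpha> * (T \<alpha> (q \<beta>) * T \<alpha> (T \<beta> (r \<epsilon>))) else 0)" for \<alpha> \<beta> \<epsilon>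

  have "skew_mult \<tau> k pq r \<delta> = (\<Sum>\<gamma>\<in>AB. \<Sum>\<epsilon>\<in>C. if padd \<gamma> \<epsilon> = \<delta> then pq \<gamma> * T \<gamma> (r \<epsilon>) else 0)"
    unfolding T_def by (rule conv[OF hom pqc r fAB sAB fC]) (auto simp: C_def)
  also have "\<dots> = (\<Sum>\<gamma>\<in>AB. \<Sum>\<epsilon>\<in>C. \<Sum>\<alpha>\<in>A. \<Sum>\<beta>\<in>B. if padd \<alpha> \<beta> = \<gamma> then (if padd \<gamma> \<epsilon> = \<delta> then p \<alpha> * T \<alpha> (q \<beta>) * T \<gamma> (r \<epsilon>) else 0) else 0)"
  proof (rule sum.cong[OF refl], rule sum.cong[OF refl])
    fix \<gamma> \<epsilon>
    show "(if padd \<gamma> \<epsilon> = \<delta> then pq \<gamma> * T \<gamma> (r \<epsilon>) else 0) = (\<Sum>\<alpha>\<in>A. \<Sum>\<beta>\<in>B. if padd \<alpha> \<beta> = \<gamma> then (if padd \<gamma> \<epsilon> = \<delta> then p \<alpha> * T \<alpha> (q \<beta>) * T \<gamma> (r \<epsilon>) else 0) else 0)"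
      by (cases "padd \<gamma> \<epsilon> = \<delta>") (simp_all add: pqe sum_distrib_right if_mult0 cong: if_cong)
  qed
  also have "\<dots> = (\<Sum>\<alpha>\<in>A. \<Sum>\<beta>\<in>B. \<Sum>\<gamma>\<in>AB. \<Sum>\<epsilon>\<in>C. if padd \<alpha> \<beta> = \<gamma> then (if padd \<gamma> \<epsilon> = \<delta> then p \<alpha> * T \<alpha> (q \<beta>) * T \<gamma> (r \<epsilon>) else 0) else 0)"
    by (rule swap4)
  also have "\<dots> = (\<Sum>\<alpha>\<in>A. \<Sum>\<beta>\<in>B. \<Sum>\<epsilon>\<in>C. F \<alpha> \<beta> \<epsilon>)"
  proof (rule sum.cong[OF refl], rule sum.cong[OF refl])
    fix \<alpha> \<beta> assume a: "\<alpha> \<in> A" and b: "\<beta> \<in> B"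
    have ab: "padd \<alpha> \<beta> \<in> AB" using a b by (auto simp: AB_def)
    have "(\<Sum>\<gamma>\<in>AB. \<Sum>\<epsilon>\<in>C. if padd \<alpha> \<beta> = \<gamma> then (if padd \<gamma> \<epsilon> = \<delta> then p \<alpha> * T \<alpha> (q \<beta>) * T \<gamma> (r \<epsilon>) else 0) else 0)
        = (\<Sum>\<gamma>\<in>AB. if padd \<alpha> \<beta> = \<gamma> then (\<Sum>\<epsilon>\<in>C. if padd \<gamma> \<epsilon> = \<delta> then p \<alpha> * T \<alpha> (q \<beta>) * T \<gamma> (r \<epsilon>) else 0) else 0)"
      by (simp only: sum_if_out)
    also have "\<dots> = (\<Sum>\<epsilon>\<in>C. if padd (padd \<alpha> \<beta>) \<epsilon> = \<delta> then p \<alpha> * T \<alpha> (q \<beta>) * T (padd \<alpha> \<beta>) (r \<epsilon>) else 0)"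
      using fAB ab by (simp add: sum.delta')
    also have "\<dots> = (\<Sum>\<epsilon>\<in>C. F \<alpha> \<beta> \<epsilon>)"
      by (intro sum.cong refl) (simp add: F_def T_def T_padd mult.assoc)
    finally show "(\<Sum>\<gamma>\<in>AB. \<Sum>\<epsilon>\<in>C. if padd \<alpha> \<beta> = \<gamma> then (if padd \<gamma> \<epsilon> = \<delta> then p \<alpha> * T \<alpha> (q \<beta>) * T \<gamma> (r \<epsilon>) else 0) else 0) = (\<Sum>\<epsilon>\<in>C. F \<alpha> \<beta> \<epsilon>)" .
  qed
  finally have L: "skew_mult \<tau> k pq r \<delta> = (\<Sum>\<alpha>\<in>A. \<Sum>\<beta>\<in>B. \<Sum>\<epsilon>\<in>C. F \<alpha> \<beta> \<epsilon>)" .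

  have "skew_mult \<tau> k p qr \<delta> = (\<Sum>\<alpha>\<in>A. \<Sum>\<eta>\<in>BC. if padd \<alpha> \<eta> = \<delta> then p \<alpha> * T \<alpha> (qr \<eta>) else 0)"
    unfolding T_def by (rule conv[OF hom p qrc fA _ fBC sBC]) (auto simp: A_def)
  also have "\<dots> = (\<Sum>\<alpha>\<in>A. \<Sum>\<eta>\<in>BC. \<Sum>\<beta>\<in>B. \<Sum>\<epsilon>\<in>C. if padd \<beta> \<epsilon> = \<eta> then (if padd \<alpha> \<eta> = \<delta> then p \<alpha> * (T \<alpha> (q \<beta>) * T \<alpha> (T \<beta> (r \<epsilon>))) else 0) else 0)"
  proof (rule sum.cong[OF refl], rule sum.cong[OF refl])
    fix \<alpha> \<eta>
    have "T \<alpha> (qr \<eta>) = (\<Sum>\<beta>\<in>B. \<Sum>\<epsilon>\<in>C. if padd \<beta> \<epsilon> = \<eta> then T \<alpha> (q \<beta>) * T \<alpha> (T \<beta> (r \<epsilon>)) else 0)"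
      using Th[of \<alpha>] by (simp add: qre hommy_sum hommy_zero hommy_mult if_distrib cong: if_cong)
    then show "(if padd \<alpha> \<eta> = \<delta> then p \<alpha> * T \<alpha> (qr \<eta>) else 0) = (\<Sum>\<beta>\<in>B. \<Sum>\<epsilon>\<in>C. if padd \<beta> \<epsilon> = \<eta> then (if padd \<alpha> \<eta> = \<delta> then p \<alpha> * (T \<alpha> (q \<beta>) * T \<alpha> (T \<beta> (r \<epsilon>))) else 0) else 0)"
      by (cases "padd \<alpha> \<eta> = \<delta>") (simp_all add: sum_distrib_left if_distrib cong: if_cong)
  qed
  also have "\<dots> = (\<Sum>\<alpha>\<in>A. \<Sum>\<beta>\<in>B. \<Sum>\<epsilon>\<in>C. \<Sum>\<eta>\<in>BC. if padd \<beta> \<epsilon> = \<eta> then (if padd \<alpha> \<eta> = \<delta> then p \<alpha> * (T \<alpha> (q \<beta>) * T \<alpha> (T \<beta> (r \<epsilon>))) else 0) else 0)"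
    by (rule sum.cong[OF refl], rule swap3)
  also have "\<dots> = (\<Sum>\<alpha>\<in>A. \<Sum>\<beta>\<in>B. \<Sum>\<epsilon>\<in>C. F \<alpha> \<beta> \<epsilon>)"
  proof (rule sum.cong[OF refl], rule sum.cong[OF refl], rule sum.cong[OF refl])
    fix \<alpha> \<beta> \<epsilon> assume b: "\<beta> \<in> B" and c: "\<epsilon> \<in> C"
    have bc: "padd \<beta> \<epsilon> \<in> BC" using b c by (auto simp: BC_def)
    show "(\<Sum>\<eta>\<in>BC. if padd \<beta> \<epsilon> = \<eta> then (if padd \<alpha> \<eta> = \<delta> then p \<alpha> * (T \<alpha> (q \<beta>) * T \<alpha> (T \<beta> (r \<epsilon>))) else 0) else 0) = F \<alpha> \<beta> \<epsilon>"
      using fBC bc by (simp add: sum.delta' F_def padd_assoc)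
  qed
  finally have R: "skew_mult \<tau> k p qr \<delta> = (\<Sum>\<alpha>\<in>A. \<Sum>\<beta>\<in>B. \<Sum>\<epsilon>\<in>C. F \<alpha> \<beta> \<epsilon>)" .
  show "skew_mult \<tau> k (skew_mult \<tau> k p q) r \<delta> = skew_mult \<tau> k p (skew_mult \<tau> k q r) \<delta>"
    using L R by (simp add: pq_def qr_def)
qed

lemma add_closed:
  assumes "p \<in> skew_carrier k" "q \<in> skew_carrier k"
  shows "(\<lambda>\<alpha>. p \<alpha> + q \<alpha>) \<in> skew_carrier k"
proof -
  have "{\<alpha>. p \<alpha> + q \<alpha> \<noteq> 0} \<subseteq> {\<alpha>. p \<alpha> \<noteq> 0} \<union> {\<alpha>. q \<alpha> \<noteq> 0}" by auto
  moreover have "finite ({\<alpha>. p \<alpha> \<noteq> 0} \<union> {\<alpha>. q \<alpha> \<noteq> 0})" using assms by (simp add: skew_carrier_def)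
  ultimately have "finite {\<alpha>. p \<alpha> + q \<alpha> \<noteq> 0}" by (rule finite_subset)
  moreover have "\<forall>\<alpha>. p \<alpha> + q \<alpha> \<noteq> 0 \<longrightarrow> (\<forall>i\<ge>k. \<alpha> i = 0)"
    using assms by (auto simp: skew_carrier_def) (metis add.right_neutral)
  ultimately show ?thesis by (simp add: skew_carrier_def)
qed

lemma skew_ring: "ring (skew_poly_ring \<tau> k)"
proof (rule ringI)
  show "abelian_group (skew_poly_ring \<tau> k)"
  proof (rule abelian_groupI)
    fix x y assume "x \<in> carrier (skew_poly_ring \<tau> k)" "y \<in> carrier (skew_poly_ring \<tau> k)"
    then show "x \<oplus>\<^bsub>skew_poly_ring \<tau> k\<^esub> y \<in> carrier (skew_poly_ring \<tau> k)"
      by (simp add: skew_poly_ring_def add_closed)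
  next
    show "\<zero>\<^bsub>skew_poly_ring \<tau> k\<^esub> \<in> carrier (skew_poly_ring \<tau> k)"
      by (simp add: skew_poly_ring_def skew_carrier_def)
  next
    fix x y z
    show "x \<oplus>\<^bsub>skew_poly_ring \<tau> k\<^esub> y \<oplus>\<^bsub>skew_poly_ring \<tau> k\<^esub> z = x \<oplus>\<^bsub>skew_poly_ring \<tau> k\<^esub> (y \<oplus>\<^bsub>skew_poly_ring \<tau> k\<^esub> z)"
      by (simp add: skew_poly_ring_def add.assoc)
  next
    fix x y
    show "x \<oplus>\<^bsub>skew_poly_ring \<tau> k\<^esub> y = y \<oplus>\<^bsub>skew_poly_ring \<tau> k\<^esub> x"
      by (simp add: skew_poly_ring_def add.commute)
  next
    fix x
    show "\<zero>\<^bsub>skew_poly_ring \<tau> k\<^esub> \<oplus>\<^bsub>skew_poly_ring \<tau> k\<^esub> x = x"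
      by (simp add: skew_poly_ring_def)
  next
    fix x assume x: "x \<in> carrier (skew_poly_ring \<tau> k)"
    show "\<exists>y\<in>carrier (skew_poly_ring \<tau> k). y \<oplus>\<^bsub>skew_poly_ring \<tau> k\<^esub> x = \<zero>\<^bsub>skew_poly_ring \<tau> k\<^esub>"
    proof (rule bexI[where x="\<lambda>\<alpha>. - x \<alpha>"])
      show "(\<lambda>\<alpha>. - x \<alpha>) \<oplus>\<^bsub>skew_poly_ring \<tau> k\<^esub> x = \<zero>\<^bsub>skew_poly_ring \<tau> k\<^esub>"
        by (simp add: skew_poly_ring_def)
      show "(\<lambda>\<alpha>. - x \<alpha>) \<in> carrier (skew_poly_ring \<tau> k)"
        using x by (simp add: skew_poly_ring_def skew_carrier_def)
    qed
  qed
next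
  show "monoid (skew_poly_ring \<tau> k)"
  proof (rule monoidI)
    fix x y assume "x \<in> carrier (skew_poly_ring \<tau> k)" "y \<in> carrier (skew_poly_ring \<tau> k)"
    then show "x \<otimes>\<^bsub>skew_poly_ring \<tau> k\<^esub> y \<in> carrier (skew_poly_ring \<tau> k)"
      by (simp add: skew_poly_ring_def mult_closed[OF hom])
  next
    show "\<one>\<^bsub>skew_poly_ring \<tau> k\<^esub> \<in> carrier (skew_poly_ring \<tau> k)"
      by (simp add: skew_poly_ring_def skew_carrier_def skew_const_def)
  next
    fix x y z assume "x \<in> carrier (skew_poly_ring \<tau> k)" "y \<in> carrier (skew_poly_ring \<tau> k)" "z \<in> carrier (skew_poly_ring \<tau> k)"
    then show "x \<otimes>\<^bsub>skew_poly_ring \<tau> k\<^esub> y \<otimes>\<^bsub>skew_poly_ring \<tau> k\<^esub> z = x \<otimes>\<^bsub>skew_poly_ring \<tau> k\<^esub> (y \<otimes>\<^bsub>skew_poly_ring \<tau> k\<^esub> z)"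
      by (simp add: skew_poly_ring_def skew_assoc)
  next
    fix x assume "x \<in> carrier (skew_poly_ring \<tau> k)"
    then show "\<one>\<^bsub>skew_poly_ring \<tau> k\<^esub> \<otimes>\<^bsub>skew_poly_ring \<tau> k\<^esub> x = x"
      by (simp add: skew_poly_ring_def one_mult[OF hom])
  next
    fix x assume "x \<in> carrier (skew_poly_ring \<tau> k)"
    then show "x \<otimes>\<^bsub>skew_poly_ring \<tau> k\<^esub> \<one>\<^bsub>skew_poly_ring \<tau> k\<^esub> = x"
      by (simp add: skew_poly_ring_def mult_one[OF hom])
  qed
next
  fix x y z
  show "(x \<oplus>\<^bsub>skew_poly_ring \<tau> k\<^esub> y) \<otimes>\<^bsub>skew_poly_ring \<tau> k\<^esub> z = x \<otimes>\<^bsub>skew_poly_ring \<tau> k\<^esub> z \<oplus>\<^bsub>skew_poly_ring \<tau> k\<^esub> y \<otimes>\<^bsub>skew_poly_ring \<tau> k\<^esub> z"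
    by (simp add: skew_poly_ring_def l_distr[OF hom])
  show "z \<otimes>\<^bsub>skew_poly_ring \<tau> k\<^esub> (x \<oplus>\<^bsub>skew_poly_ring \<tau> k\<^esub> y) = z \<otimes>\<^bsub>skew_poly_ring \<tau> k\<^esub> x \<oplus>\<^bsub>skew_poly_ring \<tau> k\<^esub> z \<otimes>\<^bsub>skew_poly_ring \<tau> k\<^esub> y"
    by (simp add: skew_poly_ring_def r_distr[OF hom])
qed

end

lemma (in ring_hom_ring) my_hom_finsum:
  "f \<in> A \<rightarrow> carrier R \<Longrightarrow> h (finsum R f A) = finsum S (h \<circ> f) A"
  by (induct A rule: infinite_finite_induct, auto simp: Pi_def)

lemma (in ring_hom_ring) hom_generate:
  assumes H: "H \<subseteq> carrier R"
  shows "x \<in> generate_ring R H \<Longrightarrow> h x \<in> generate_ring S (h ` H)"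
proof (induction rule: generate_ring.induct)
  case one then show ?case by (simp add: generate_ring.one)
next
  case (incl x) then show ?case by (simp add: generate_ring.incl)
next
  case (a_inv x)
  have "x \<in> carrier R" using R.generate_ring_in_carrier[OF H a_inv.hyps] .
  then show ?case using a_inv.IH by (simp add: generate_ring.a_inv)
next
  case (eng_add x y)
  have "x \<in> carrier R" "y \<in> carrier R" using R.generate_ring_in_carrier[OF H] eng_add.hyps by auto
  then show ?case using eng_add.IH by (simp add: generate_ring.eng_add)
next
  case (eng_mult x y)
  have "x \<in> carrier R" "y \<in> carrier R" using R.generate_ring_in_carrier[OF H] eng_mult.hyps by auto
  then show ?case using eng_mult.IH by (simp add: generate_ring.eng_mult)
qed

lemma (in ring_hom_ring) hom_monom:
  assumes "\<forall>i<m. a i \<in> carrier R"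
  shows "monom_in R a m \<alpha> \<in> carrier R \<and> h (monom_in R a m \<alpha>) = monom_in S (\<lambda>i. h (a i)) m \<alpha>"
  using assms
proof (induction m)
  case 0 then show ?case by simp
next
  case (Suc m)
  then have am: "a m \<in> carrier R" by simp
  from Suc have IH: "monom_in R a m \<alpha> \<in> carrier R" "h (monom_in R a m \<alpha>) = monom_in S (\<lambda>i. h (a i)) m \<alpha>" by auto
  show ?case using IH am by (simp add: hom_nat_pow)
qed

lemma transfer_norm:
  fixes S :: "('b, 'c) ring_scheme" and S' :: "('e, 'f) ring_scheme"
    and \<iota> :: "'d::division_ring \<Rightarrow> 'b" and \<iota>' :: "'d \<Rightarrow> 'e"
  assumes hr: "ring_hom_ring S S' \<phi>" and bij: "bij_betw \<phi> (carrier S) (carrier S')"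
    and \<iota>: "\<forall>d. \<iota> d \<in> carrier S" and comp: "\<forall>d. \<phi> (\<iota> d) = \<iota>' d"
    and N: "aut_normalizable S \<iota>"
  shows "aut_normalizable S' \<iota>'"
proof -
  interpret h: ring_hom_ring S S' \<phi> by (rule hr)
  have inj: "inj_on \<phi> (carrier S)" and surj: "\<phi> ` carrier S = carrier S'"
    using bij by (auto simp: bij_betw_def)
  obtain m a \<sigma> G where
    a: "\<forall>i<m. a i \<in> carrier S" and
    ac: "\<forall>i<m. \<forall>j<m. a i \<otimes>\<^bsub>S\<^esub> a j = a j \<otimes>\<^bsub>S\<^esub> a i" and
    \<sigma>: "\<forall>i<m. ring_aut (\<sigma> i)" and
    \<sigma>c: "\<forall>i<m. \<forall>j<m. \<sigma> i \<circ> \<sigma> j = \<sigma> j \<circ> \<sigma> i" and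
    aut: "\<forall>i<m. \<forall>b. a i \<otimes>\<^bsub>S\<^esub> \<iota> b = \<iota> (\<sigma> i b) \<otimes>\<^bsub>S\<^esub> a i" and
    ind: "\<forall>c :: (nat \<Rightarrow> nat) \<Rightarrow> 'd.
           finite {\<alpha>. c \<alpha> \<noteq> 0} \<longrightarrow> (\<forall>\<alpha>. c \<alpha> \<noteq> 0 \<longrightarrow> (\<forall>i\<ge>m. \<alpha> i = 0)) \<longrightarrow>
           finsum S (\<lambda>\<alpha>. \<iota> (c \<alpha>) \<otimes>\<^bsub>S\<^esub> monom_in S a m \<alpha>) {\<alpha>. c \<alpha> \<noteq> 0} = \<zero>\<^bsub>S\<^esub> \<longrightarrow>
           (\<forall>\<alpha>. c \<alpha> = 0)" and
    G1: "finite G" and G2: "G \<subseteq> carrier S" and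
    G3: "\<forall>s\<in>carrier S. \<exists>r. (\<forall>g\<in>G. r g \<in> generate_ring S (range \<iota> \<union> a ` {..<m}))
                               \<and> s = finsum S (\<lambda>g. r g \<otimes>\<^bsub>S\<^esub> g) G"
    using N unfolding aut_normalizable_def by (elim exE conjE) (rule that; assumption)
  define a' where "a' = (\<lambda>i. \<phi> (a i))"
  have P1: "\<forall>i<m. a' i \<in> carrier S'" using a by (simp add: a'_def)
  have P2: "\<forall>i<m. \<forall>j<m. a' i \<otimes>\<^bsub>S'\<^esub> a' j = a' j \<otimes>\<^bsub>S'\<^esub> a' i"
    unfolding a'_def using a ac by (metis h.hom_mult)
  have P5: "\<forall>i<m. \<forall>b. a' i \<otimes>\<^bsub>S'\<^esub> \<iota>' b = \<iota>' (\<sigma> i b) \<otimes>\<^bsub>S'\<^esub> a' i"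
  proof (intro allI impI)
    fix i b assume i: "i < m"
    have "a' i \<otimes>\<^bsub>S'\<^esub> \<iota>' b = \<phi> (a i \<otimes>\<^bsub>S\<^esub> \<iota> b)" using a i \<iota> comp by (simp add: a'_def)
    also have "\<dots> = \<phi> (\<iota> (\<sigma> i b) \<otimes>\<^bsub>S\<^esub> a i)" using aut i by simp
    also have "\<dots> = \<iota>' (\<sigma> i b) \<otimes>\<^bsub>S'\<^esub> a' i" using a i \<iota> comp by (simp add: a'_def)
    finally show "a' i \<otimes>\<^bsub>S'\<^esub> \<iota>' b = \<iota>' (\<sigma> i b) \<otimes>\<^bsub>S'\<^esub> a' i" .
  qed
  have P6: "\<forall>c :: (nat \<Rightarrow> nat) \<Rightarrow> 'd.
           finite {\<alpha>. c \<alpha> \<noteq> 0} \<longrightarrow> (\<forall>\<alpha>. c \<alpha> \<noteq> 0 \<longrightarrow> (\<forall>i\<ge>m. \<alpha> i = 0)) \<longrightarrow>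
           finsum S' (\<lambda>\<alpha>. \<iota>' (c \<alpha>) \<otimes>\<^bsub>S'\<^esub> monom_in S' a' m \<alpha>) {\<alpha>. c \<alpha> \<noteq> 0} = \<zero>\<^bsub>S'\<^esub> \<longrightarrow>
           (\<forall>\<alpha>. c \<alpha> = 0)"
  proof (intro allI impI)
    fix c :: "(nat \<Rightarrow> nat) \<Rightarrow> 'd" and \<beta>
    assume c1: "finite {\<alpha>. c \<alpha> \<noteq> 0}" and c2: "\<forall>\<alpha>. c \<alpha> \<noteq> 0 \<longrightarrow> (\<forall>i\<ge>m. \<alpha> i = 0)"
      and c3: "finsum S' (\<lambda>\<alpha>. \<iota>' (c \<alpha>) \<otimes>\<^bsub>S'\<^esub> monom_in S' a' m \<alpha>) {\<alpha>. c \<alpha> \<noteq> 0} = \<zero>\<^bsub>S'\<^esub>"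
    let ?f = "\<lambda>\<alpha>. \<iota> (c \<alpha>) \<otimes>\<^bsub>S\<^esub> monom_in S a m \<alpha>"
    have mc: "\<And>\<alpha>. monom_in S a m \<alpha> \<in> carrier S" and mh: "\<And>\<alpha>. \<phi> (monom_in S a m \<alpha>) = monom_in S' a' m \<alpha>"
      using h.hom_monom[OF a] by (auto simp: a'_def)
    have fc: "?f \<in> {\<alpha>. c \<alpha> \<noteq> 0} \<rightarrow> carrier S" using mc \<iota> by auto
    have i'c: "\<And>d. \<iota>' d \<in> carrier S'" using comp \<iota> h.hom_closed by metis
    have m'c: "\<And>\<alpha>. monom_in S' a' m \<alpha> \<in> carrier S'" using mc mh h.hom_closed by metis
    have "\<phi> (finsum S ?f {\<alpha>. c \<alpha> \<noteq> 0}) = finsum S' (\<phi> \<circ> ?f) {\<alpha>. c \<alpha> \<noteq> 0}"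
      by (rule h.my_hom_finsum[OF fc])
    also have "\<dots> = finsum S' (\<lambda>\<alpha>. \<iota>' (c \<alpha>) \<otimes>\<^bsub>S'\<^esub> monom_in S' a' m \<alpha>) {\<alpha>. c \<alpha> \<noteq> 0}"
      using mc \<iota> comp mh i'c m'c by (intro h.S.finsum_cong') auto
    also have "\<dots> = \<phi> \<zero>\<^bsub>S\<^esub>" using c3 by simp
    finally have "\<phi> (finsum S ?f {\<alpha>. c \<alpha> \<noteq> 0}) = \<phi> \<zero>\<^bsub>S\<^esub>" .
    then have "finsum S ?f {\<alpha>. c \<alpha> \<noteq> 0} = \<zero>\<^bsub>S\<^esub>"
    proof -
      have fs: "finsum S ?f {\<alpha>. c \<alpha> \<noteq> 0} \<in> carrier S" by (rule h.R.finsum_closed[OF fc])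
      have z: "\<zero>\<^bsub>S\<^esub> \<in> carrier S" by simp
      show ?thesis by (rule inj_onD[OF inj \<open>\<phi> (finsum S ?f {\<alpha>. c \<alpha> \<noteq> 0}) = \<phi> \<zero>\<^bsub>S\<^esub>\<close> fs z])
    qed
    then show "c \<beta> = 0" using ind c1 c2 by blast
  qed
  have P7: "\<exists>G. finite G \<and> G \<subseteq> carrier S' \<and>
           (\<forall>s\<in>carrier S'. \<exists>r. (\<forall>g\<in>G. r g \<in> generate_ring S' (range \<iota>' \<union> a' ` {..<m}))
                               \<and> s = finsum S' (\<lambda>g. r g \<otimes>\<^bsub>S'\<^esub> g) G)"
  proof -
    have injG: "inj_on \<phi> G" using inj G2 inj_on_subset by blast
    have Hc: "range \<iota> \<union> a ` {..<m} \<subseteq> carrier S" using \<iota> a by auto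
    have ci: "(\<lambda>d. \<phi> (\<iota> d)) = \<iota>'" using comp by auto
    have Him: "\<phi> ` (range \<iota> \<union> a ` {..<m}) = range \<iota>' \<union> a' ` {..<m}"
      by (simp only: image_Un image_image ci a'_def)
    have "\<forall>s'\<in>carrier S'. \<exists>r. (\<forall>g\<in>\<phi> ` G. r g \<in> generate_ring S' (range \<iota>' \<union> a' ` {..<m}))
                               \<and> s' = finsum S' (\<lambda>g. r g \<otimes>\<^bsub>S'\<^esub> g) (\<phi> ` G)"
    proof
      fix s' assume "s' \<in> carrier S'"
      then obtain s where s: "s \<in> carrier S" "s' = \<phi> s" using surj by auto
      then obtain r where r1: "\<forall>g\<in>G. r g \<in> generate_ring S (range \<iota> \<union> a ` {..<m})"
        and r2: "s = finsum S (\<lambda>g. r g \<otimes>\<^bsub>S\<^esub> g) G" using G3 by blast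
      have rc: "\<And>g. g \<in> G \<Longrightarrow> r g \<in> carrier S" using r1 h.R.generate_ring_in_carrier[OF Hc] by blast
      define r' where "r' g' = \<phi> (r (inv_into G \<phi> g'))" for g'
      have r'\<phi>: "\<And>g. g \<in> G \<Longrightarrow> r' (\<phi> g) = \<phi> (r g)" using injG by (simp add: r'_def)
      have "\<forall>g\<in>\<phi> ` G. r' g \<in> generate_ring S' (range \<iota>' \<union> a' ` {..<m})"
        using r'\<phi> r1 h.hom_generate[OF Hc] Him by auto
      moreover have "s' = finsum S' (\<lambda>g. r' g \<otimes>\<^bsub>S'\<^esub> g) (\<phi> ` G)"
      proof -
        have fc: "(\<lambda>g. r g \<otimes>\<^bsub>S\<^esub> g) \<in> G \<rightarrow> carrier S" using rc G2 by auto
        have "s' = finsum S' (\<phi> \<circ> (\<lambda>g. r g \<otimes>\<^bsub>S\<^esub> g)) G" using s r2 h.my_hom_finsum[OF fc] by simp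
        also have "\<dots> = finsum S' (\<lambda>g. r' (\<phi> g) \<otimes>\<^bsub>S'\<^esub> \<phi> g) G"
          using rc G2 r'\<phi> by (intro h.S.finsum_cong') auto
        also have "\<dots> = finsum S' (\<lambda>g. r' g \<otimes>\<^bsub>S'\<^esub> g) (\<phi> ` G)"
        proof (rule h.S.finsum_reindex[symmetric])
          show "(\<lambda>g. r' g \<otimes>\<^bsub>S'\<^esub> g) \<in> \<phi> ` G \<rightarrow> carrier S'"
            using r'\<phi> rc G2 by auto
          show "inj_on \<phi> G" by (rule injG)
        qed
        finally show ?thesis .
      qed
      ultimately show "\<exists>r. (\<forall>g\<in>\<phi> ` G. r g \<in> generate_ring S' (range \<iota>' \<union> a' ` {..<m}))
                               \<and> s' = finsum S' (\<lambda>g. r g \<otimes>\<^bsub>S'\<^esub> g) (\<phi> ` G)" by blast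
    qed
    moreover have "finite (\<phi> ` G)" using G1 by simp
    moreover have "\<phi> ` G \<subseteq> carrier S'" using G2 by auto
    ultimately show ?thesis by blast
  qed
  show ?thesis unfolding aut_normalizable_def
    apply (rule exI[of _ m], rule exI[of _ a'], rule exI[of _ \<sigma>])
    by (intro conjI P1 P2 \<sigma> \<sigma>c P5 P6 P7)
qed

definition proj_r :: "nat \<Rightarrow> ((nat \<Rightarrow> nat) \<Rightarrow> 'a::division_ring) \<Rightarrow> (nat \<Rightarrow> nat) \<Rightarrow> 'a" where
  "proj_r r p = (\<lambda>\<alpha>. if \<forall>i\<ge>r. \<alpha> i = 0 then p \<alpha> else 0)"

lemma proj_hom:
  fixes \<sigma> :: "nat \<Rightarrow> 'a::division_ring \<Rightarrow> 'a"
  assumes homr: "\<forall>i<r. hommy (\<sigma> i)" and rn: "r \<le> n"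
  shows "proj_r r \<in> ring_hom (skew_poly_ring \<sigma> n) (skew_poly_ring \<sigma> r)"
proof (rule ring_hom_memI)
  fix p assume p: "p \<in> carrier (skew_poly_ring \<sigma> n)"
  have "{\<alpha>. proj_r r p \<alpha> \<noteq> 0} \<subseteq> {\<alpha>. p \<alpha> \<noteq> 0}" by (auto simp: proj_r_def)
  moreover have "finite {\<alpha>. p \<alpha> \<noteq> 0}" using p by (simp add: skew_poly_ring_def skew_carrier_def)
  ultimately have "finite {\<alpha>. proj_r r p \<alpha> \<noteq> 0}" by (rule finite_subset)
  then show "proj_r r p \<in> carrier (skew_poly_ring \<sigma> r)"
    by (simp add: skew_poly_ring_def skew_carrier_def proj_r_def)
next
  fix p q assume p: "p \<in> carrier (skew_poly_ring \<sigma> n)" and q: "q \<in> carrier (skew_poly_ring \<sigma> n)"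
  show "proj_r r (p \<otimes>\<^bsub>skew_poly_ring \<sigma> n\<^esub> q) = proj_r r p \<otimes>\<^bsub>skew_poly_ring \<sigma> r\<^esub> proj_r r q"
  proof (simp add: skew_poly_ring_def, rule ext)
    fix \<gamma>
    show "proj_r r (skew_mult \<sigma> n p q) \<gamma> = skew_mult \<sigma> r (proj_r r p) (proj_r r q) \<gamma>"
    proof (cases "\<forall>i\<ge>r. \<gamma> i = 0")
      case True
      have "proj_r r (skew_mult \<sigma> n p q) \<gamma> = skew_mult \<sigma> n p q \<gamma>" using True by (simp add: proj_r_def)
      also have "\<dots> = skew_mult \<sigma> r (proj_r r p) (proj_r r q) \<gamma>"
        unfolding skew_mult_def
      proof (rule sum.cong[OF refl])
        fix \<alpha> assume "\<alpha> \<in> {\<alpha>. \<forall>i. \<alpha> i \<le> \<gamma> i}"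
        then have a: "\<forall>i. \<alpha> i \<le> \<gamma> i" by simp
        have c1: "\<forall>i\<ge>r. \<alpha> i = 0" using a True by (metis le_zero_eq)
        have c2: "\<forall>i\<ge>r. \<gamma> i - \<alpha> i = 0" using True by simp
        show "p \<alpha> * taupow \<sigma> n \<alpha> (q (\<lambda>i. \<gamma> i - \<alpha> i)) = proj_r r p \<alpha> * taupow \<sigma> r \<alpha> (proj_r r q (\<lambda>i. \<gamma> i - \<alpha> i))"
        proof -
          have tr: "taupow \<sigma> n \<alpha> = taupow \<sigma> r \<alpha>" by (rule taupow_restrict[OF rn c1])
          show ?thesis using c1 c2 by (simp add: proj_r_def tr)
        qed
      qed
      finally show ?thesis .
    next
      case False
      have "skew_mult \<sigma> r (proj_r r p) (proj_r r q) \<gamma> = 0"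
        unfolding skew_mult_def
      proof (rule sum.neutral, rule ballI)
        fix \<alpha> assume "\<alpha> \<in> {\<alpha>. \<forall>i. \<alpha> i \<le> \<gamma> i}"
        then have a: "\<forall>i. \<alpha> i \<le> \<gamma> i" by simp
        show "proj_r r p \<alpha> * taupow \<sigma> r \<alpha> (proj_r r q (\<lambda>i. \<gamma> i - \<alpha> i)) = 0"
        proof (cases "(\<forall>i\<ge>r. \<alpha> i = 0) \<and> (\<forall>i\<ge>r. \<gamma> i - \<alpha> i = 0)")
          case True
          then have "\<forall>i\<ge>r. \<gamma> i = 0" using a by (metis add_diff_inverse_nat add_0 not_less le_zero_eq diff_is_0_eq)
          then show ?thesis using False by blast
        next
          case c: False
          then show ?thesis using T0[OF homr] by (auto simp: proj_r_def)
        qed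
      qed
      moreover have "proj_r r (skew_mult \<sigma> n p q) \<gamma> = 0"
        unfolding proj_r_def by (subst if_not_P[OF False]) (rule refl)
      ultimately show ?thesis by simp
    qed
  qed
next
  fix p q
  show "proj_r r (p \<oplus>\<^bsub>skew_poly_ring \<sigma> n\<^esub> q) = proj_r r p \<oplus>\<^bsub>skew_poly_ring \<sigma> r\<^esub> proj_r r q"
    by (auto simp: skew_poly_ring_def proj_r_def fun_eq_iff)
next
  show "proj_r r \<one>\<^bsub>skew_poly_ring \<sigma> n\<^esub> = \<one>\<^bsub>skew_poly_ring \<sigma> r\<^esub>"
    by (auto simp: skew_poly_ring_def proj_r_def skew_const_def)
qed

theorem proposition5p2:
  fixes \<sigma> :: "nat \<Rightarrow> 'a::division_ring \<Rightarrow> 'a" and n r :: nat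
  assumes "\<forall>i<n. ring_aut (\<sigma> i)"
    and "\<forall>i<n. \<forall>j<n. \<sigma> i \<circ> \<sigma> j = \<sigma> j \<circ> \<sigma> i"
    and "r \<le> n"
    and "\<not> tuple_aut_normalizable \<sigma> r"
  shows "\<not> tuple_aut_normalizable \<sigma> n"
proof
  assume T: "tuple_aut_normalizable \<sigma> n"
  define Rn where "Rn = skew_poly_ring \<sigma> n"
  define Rr where "Rr = skew_poly_ring \<sigma> r"
  obtain I where I: "ideal I Rr" and Ip: "I \<noteq> carrier Rr"
    and nI: "\<not> aut_normalizable (Rr Quot I) (\<lambda>d. I +>\<^bsub>Rr\<^esub> skew_const d)"
    using assms(4) unfolding tuple_aut_normalizable_def Rr_def by blast
  have homn: "\<forall>i<n. hommy (\<sigma> i)" using assms(1) ring_aut_hommy by blast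
  have homr: "\<forall>i<r. hommy (\<sigma> i)" using homn assms(3) by auto
  have comn: "\<forall>i<n. \<forall>j<n. \<sigma> i \<circ> \<sigma> j = \<sigma> j \<circ> \<sigma> i" using assms(2) .
  have ringn: "ring Rn" unfolding Rn_def by (rule skew_ring[OF homn comn])
  interpret Iid: ideal I Rr by (rule I)
  define hq where "hq = (\<lambda>p. I +>\<^bsub>Rr\<^esub> proj_r r p)"
  have hq_hom: "hq \<in> ring_hom Rn (Rr Quot I)"
  proof -
    have "(\<lambda>x. I +>\<^bsub>Rr\<^esub> x) \<circ> proj_r r \<in> ring_hom Rn (Rr Quot I)"
      by (rule ring_hom_trans[OF proj_hom[OF homr assms(3), folded Rn_def Rr_def] Iid.rcos_ring_hom])
    then show ?thesis by (simp add: hq_def comp_def)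
  qed
  have hr: "ring_hom_ring Rn (Rr Quot I) hq"
    by (rule ring_hom_ringI2[OF ringn Iid.quotient_is_ring hq_hom])
  have cr: "carrier Rr \<subseteq> carrier Rn" using assms(3)
    by (auto simp: Rr_def Rn_def skew_poly_ring_def skew_carrier_def)
  have pr_id: "\<And>x. x \<in> carrier Rr \<Longrightarrow> proj_r r x = x"
    by (auto simp: Rr_def skew_poly_ring_def skew_carrier_def proj_r_def fun_eq_iff)
  have surj: "hq ` carrier Rn = carrier (Rr Quot I)"
  proof
    show "hq ` carrier Rn \<subseteq> carrier (Rr Quot I)" using ring_hom_closed[OF hq_hom] by auto
    show "carrier (Rr Quot I) \<subseteq> hq ` carrier Rn"
    proof
      fix X assume "X \<in> carrier (Rr Quot I)"
      then obtain x where x: "x \<in> carrier Rr" "X = I +>\<^bsub>Rr\<^esub> x"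
        unfolding FactRing_def A_RCOSETS_def' by auto
      then have "X = hq x" by (simp add: hq_def pr_id)
      then show "X \<in> hq ` carrier Rn" using x cr by auto
    qed
  qed
  define K where "K = a_kernel Rn (Rr Quot I) hq"
  have Kid: "ideal K Rn" unfolding K_def by (rule ring_hom_ring.kernel_is_ideal[OF hr])
  have Kp: "K \<noteq> carrier Rn"
  proof
    assume "K = carrier Rn"
    then have "\<one>\<^bsub>Rn\<^esub> \<in> K" using ring.ring_simprules(6)[OF ringn] by simp
    then have "hq \<one>\<^bsub>Rn\<^esub> = \<zero>\<^bsub>Rr Quot I\<^esub>" by (simp add: K_def a_kernel_def')
    moreover have "hq \<one>\<^bsub>Rn\<^esub> = \<one>\<^bsub>Rr Quot I\<^esub>" by (rule ring_hom_one[OF hq_hom])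
    ultimately have "I +>\<^bsub>Rr\<^esub> \<one>\<^bsub>Rr\<^esub> = I" by (simp add: FactRing_def)
    moreover have "\<one>\<^bsub>Rr\<^esub> \<in> I +>\<^bsub>Rr\<^esub> \<one>\<^bsub>Rr\<^esub>" by (rule Iid.a_rcos_self) simp
    ultimately have "\<one>\<^bsub>Rr\<^esub> \<in> I" by simp
    then show False using Iid.one_imp_carrier Ip by blast
  qed
  have NK: "aut_normalizable (Rn Quot K) (\<lambda>d. K +>\<^bsub>Rn\<^esub> skew_const d)"
    using T Kid Kp unfolding tuple_aut_normalizable_def Rn_def by blast
  have iso: "(\<lambda>X. the_elem (hq ` X)) \<in> ring_iso (Rn Quot K) (Rr Quot I)"
    unfolding K_def by (rule ring_hom_ring.FactRing_iso_set[OF hr surj])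
  have const_c: "\<And>d. skew_const d \<in> carrier Rn"
    by (simp add: Rn_def skew_poly_ring_def skew_carrier_def skew_const_def)
  have "aut_normalizable (Rr Quot I) (\<lambda>d. I +>\<^bsub>Rr\<^esub> skew_const d)"
  proof (rule transfer_norm[OF _ _ _ _ NK])
    show "ring_hom_ring (Rn Quot K) (Rr Quot I) (\<lambda>X. the_elem (hq ` X))"
      using iso by (intro ring_hom_ringI2[OF ideal.quotient_is_ring[OF Kid] Iid.quotient_is_ring]) (simp add: ring_iso_def)
    show "bij_betw (\<lambda>X. the_elem (hq ` X)) (carrier (Rn Quot K)) (carrier (Rr Quot I))"
      using iso by (simp add: ring_iso_def)
    show "\<forall>d. K +>\<^bsub>Rn\<^esub> skew_const d \<in> carrier (Rn Quot K)"
      using const_c ideal.axioms(1)[OF Kid] by (auto simp: FactRing_def A_RCOSETS_def')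
    show "\<forall>d. the_elem (hq ` (K +>\<^bsub>Rn\<^esub> skew_const d)) = I +>\<^bsub>Rr\<^esub> skew_const d"
    proof
      fix d
      have "the_elem (hq ` (K +>\<^bsub>Rn\<^esub> skew_const d)) = hq (skew_const d)"
        unfolding K_def by (rule ring_hom_ring.the_elem_simp[OF hr const_c])
      also have "\<dots> = I +>\<^bsub>Rr\<^esub> skew_const d"
      proof -
        have "proj_r r (skew_const d) = skew_const d" by (auto simp: proj_r_def skew_const_def fun_eq_iff)
        then show ?thesis by (simp add: hq_def)
      qed
      finally show "the_elem (hq ` (K +>\<^bsub>Rn\<^esub> skew_const d)) = I +>\<^bsub>Rr\<^esub> skew_const d" .
    qed
  qed
  then show False using nI by simp
qed

end
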